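(* Let $N=\{1,\dots,n\}$, $\eta>0$, integers $B\ge1$, $Q\ge1$. Let $(A(k))_{k\ge0}$ be $n\times n$ matrices, let $x(0)\in\mathbb{R}^n$ have all components multiples of $1/Q$, and define componentwise $x_i(k+1)=\lfloor\sum_{j=1}^na_{ij}(k)x_j(k)\rfloor$, where $\lfloor\cdot\rfloor$ is rounding down to the nearest multiple of $1/Q$. Assume: (i) each $A(k)$ is doubly stochastic with positive diagonal entries and all positive entries at least $\eta$; (ii) for every integer $k\ge0$, every permutation $\sigma$ of $N$ with $x_{\sigma(1)}(kB)\ge\cdots\ge x_{\sigma(n)}(kB)$, and every $d\in\{1,\dots,n-1\}$, either $x_{\sigma(d)}(kB)=x_{\sigma(d+1)}(kB)$, or there exist $t\in\{kB,\dots,(k+1)B-1\}$, $i\in\{\sigma(1),\dots,\sigma(d)\}$, $j\in\{\sigma(d+1),\dots,\sigma(n)\}$ with $(i,j)$ or $(j,i)$ in $\mathcal{E}(A(t))$. Then for every integer $k\ge0$ and every permutation $\sigma$ of $N$ with $x_{\sigma(1)}(kB)\ge\cdots\ge x_{\sigma(n)}(kB)$, \[\underline{V}(x(kB))-\underline{V}(x((k+1)B))\ge\frac\eta2\sum_{i=1}^{n-1}\big(x_{\sigma(i)}(kB)-x_{\sigma(i+1)}(kB)\big)^2.\]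
   Context: A matrix is doubly stochastic if it is nonnegative with all row and column sums equal to $1$. For a matrix $A=[a_{ij}]$, $\mathcal{E}(A)$ is the set of directed edges $(j,i)$ (including self-edges) with $a_{ij}>0$. For $x\in\mathbb{R}^n$, $m(x)=\min_ix_i$ and $\underline{V}(x)=\sum_{i=1}^n(x_i-m(x))^2$. *)

theory Defs
  imports "HOL-Combinatorics.Permutations" Complex_Main
begin

text \<open>Indices are 0-based: N = {0..<n}. Vectors are nat => real, matrices nat => nat => real,
  only entries with indices below n are relevant.\<close>

definition doubly_stochastic :: "nat \<Rightarrow> (nat \<Rightarrow> nat \<Rightarrow> real) \<Rightarrow> bool" where
  "doubly_stochastic n A \<longleftrightarrow>
     (\<forall>i<n. \<forall>j<n. A i j \<ge> 0) \<and>
     (\<forall>i<n. (\<Sum>j<n. A i j) = 1) \<and>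
     (\<forall>j<n. (\<Sum>i<n. A i j) = 1)"

definition edges :: "nat \<Rightarrow> (nat \<Rightarrow> nat \<Rightarrow> real) \<Rightarrow> (nat \<times> nat) set" where
  "edges n A = {(j, i). i < n \<and> j < n \<and> A i j > 0}"

definition minval :: "nat \<Rightarrow> (nat \<Rightarrow> real) \<Rightarrow> real" where
  "minval n x = Min ((\<lambda>i. x i) ` {..<n})"

definition Vlow :: "nat \<Rightarrow> (nat \<Rightarrow> real) \<Rightarrow> real" where
  "Vlow n x = (\<Sum>i<n. (x i - minval n x)^2)"

definition rdown :: "nat \<Rightarrow> real \<Rightarrow> real" where
  "rdown Q y = of_int \<lfloor>real Q * y\<rfloor> / real Q"

end

theory Submission
  imports Defs
begin

lemma rdown_le: assumes "Q \<ge> (1::nat)" shows "rdown Q y \<le> y"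
proof -
  have "of_int \<lfloor>real Q * y\<rfloor> \<le> real Q * y" by simp
  moreover have "real Q > 0" using assms by simp
  ultimately show ?thesis unfolding rdown_def by (simp add: divide_le_eq mult.commute)
qed

lemma rdown_ge: assumes "Q \<ge> (1::nat)" and "u = of_int m / real Q" and "u \<le> y"
  shows "u \<le> rdown Q y"
proof -
  have Qp: "real Q > 0" using assms by simp
  have "real Q * u = of_int m" using assms Qp by simp
  hence "of_int m \<le> real Q * y" using assms Qp by (metis mult_left_mono less_imp_le)
  hence "m \<le> \<lfloor>real Q * y\<rfloor>" by (simp add: le_floor_iff)
  hence "(of_int m :: real) \<le> of_int \<lfloor>real Q * y\<rfloor>" by simp
  thus ?thesis unfolding rdown_def using assms Qp by (simp add: divide_right_mono)
qed

lemma rdown_mult: "\<exists>m::int. rdown Q y = of_int m / real Q"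
  unfolding rdown_def by blast

lemma conv_ge:
  fixes a x :: "nat \<Rightarrow> real"
  assumes "\<forall>j<n. a j \<ge> 0" "(\<Sum>j<n. a j) = 1" "\<forall>j<n. a j > 0 \<longrightarrow> u \<le> x j"
  shows "u \<le> (\<Sum>j<n. a j * x j)"
proof -
  have "(\<Sum>j<n. a j * u) \<le> (\<Sum>j<n. a j * x j)"
    apply (rule sum_mono) using assms by (metis lessThan_iff less_eq_real_def mult_left_mono mult_not_zero order_refl)
  moreover have "(\<Sum>j<n. a j * u) = u" using assms(2) by (simp add: sum_distrib_right[symmetric])
  ultimately show ?thesis by simp
qed

lemma conv_le:
  fixes a x :: "nat \<Rightarrow> real"
  assumes "\<forall>j<n. a j \<ge> 0" "(\<Sum>j<n. a j) = 1" "\<forall>j<n. a j > 0 \<longrightarrow> x j \<le> u"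
  shows "(\<Sum>j<n. a j * x j) \<le> u"
proof -
  have "(\<Sum>j<n. a j * x j) \<le> (\<Sum>j<n. a j * u)"
    apply (rule sum_mono) using assms by (metis lessThan_iff less_eq_real_def mult_left_mono mult_not_zero order_refl)
  moreover have "(\<Sum>j<n. a j * u) = u" using assms(2) by (simp add: sum_distrib_right[symmetric])
  ultimately show ?thesis by simp
qed

lemma row_ident:
  fixes a x :: "nat \<Rightarrow> real"
  assumes "(\<Sum>j<n. a j) = 1"
  shows "(\<Sum>j<n. a j * (x j - (\<Sum>l<n. a l * x l))^2) = (\<Sum>j<n. a j * (x j - c)^2) - ((\<Sum>l<n. a l * x l) - c)^2"
proof -
  define y where "y = (\<Sum>l<n. a l * x l)"
  have "(\<Sum>j<n. a j * (x j - y)^2) = (\<Sum>j<n. a j * (x j - c)^2 - 2 * (y - c) * (a j * x j) + 2*(y-c)*c * a j + (y-c)^2 * a j)"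
    by (rule sum.cong) (auto simp: power2_eq_square algebra_simps)
  also have "\<dots> = (\<Sum>j<n. a j * (x j - c)^2) - 2*(y-c)*y + 2*(y-c)*c + (y-c)^2"
    using assms by (simp add: sum.distrib sum_subtractf sum_distrib_left[symmetric] y_def)
  also have "\<dots> = (\<Sum>j<n. a j * (x j - c)^2) - (y - c)^2" by (simp add: power2_eq_square algebra_simps)
  finally show ?thesis by (simp add: y_def)
qed

lemma mat_ident:
  fixes a :: "nat \<Rightarrow> nat \<Rightarrow> real" and x :: "nat \<Rightarrow> real"
  assumes "doubly_stochastic n a"
  shows "(\<Sum>i<n. ((\<Sum>l<n. a i l * x l) - c)^2) = (\<Sum>i<n. (x i - c)^2) - (\<Sum>i<n. \<Sum>j<n. a i j * (x j - (\<Sum>l<n. a i l * x l))^2)"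
proof -
  have rs: "\<forall>i<n. (\<Sum>j<n. a i j) = 1" and cs: "\<forall>j<n. (\<Sum>i<n. a i j) = 1"
    using assms unfolding doubly_stochastic_def by auto
  have "(\<Sum>i<n. \<Sum>j<n. a i j * (x j - (\<Sum>l<n. a i l * x l))^2)
      = (\<Sum>i<n. (\<Sum>j<n. a i j * (x j - c)^2) - ((\<Sum>l<n. a i l * x l) - c)^2)"
    by (rule sum.cong) (use rs row_ident in auto)
  also have "\<dots> = (\<Sum>i<n. \<Sum>j<n. a i j * (x j - c)^2) - (\<Sum>i<n. ((\<Sum>l<n. a i l * x l) - c)^2)"
    by (simp add: sum_subtractf)
  also have "(\<Sum>i<n. \<Sum>j<n. a i j * (x j - c)^2) = (\<Sum>j<n. \<Sum>i<n. a i j * (x j - c)^2)"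
    by (rule sum.swap)
  also have "(\<Sum>j<n. \<Sum>i<n. a i j * (x j - c)^2) = (\<Sum>j<n. (x j - c)^2)"
    by (rule sum.cong) (use cs in \<open>auto simp: sum_distrib_right[symmetric]\<close>)
  finally show ?thesis by simp
qed

lemma row_bound:
  fixes a x :: "nat \<Rightarrow> real"
  assumes "\<forall>j<n. a j \<ge> 0" "p<n" "q<n" "a p \<ge> \<eta>" "a q \<ge> \<eta>" "\<eta>>0"
  shows "\<eta>/2 * (x p - x q)^2 \<le> (\<Sum>j<n. a j * (x j - y)^2)"
proof (cases "p = q")
  case True
  thus ?thesis using assms by (auto intro!: sum_nonneg)
next
  case False
  have "(\<Sum>j\<in>{p,q}. a j * (x j - y)^2) \<le> (\<Sum>j<n. a j * (x j - y)^2)"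
    by (rule sum_mono2) (use assms in auto)
  moreover have "(\<Sum>j\<in>{p,q}. a j * (x j - y)^2) = a p * (x p - y)^2 + a q * (x q - y)^2"
    using False by simp
  moreover have "\<eta> * (x p - y)^2 \<le> a p * (x p - y)^2" "\<eta> * (x q - y)^2 \<le> a q * (x q - y)^2"
    using assms by (auto intro: mult_right_mono)
  moreover have h6: "(x p - x q)^2 / 2 \<le> (x p - y)^2 + (x q - y)^2"
  proof -
    have "0 \<le> (x p + x q - 2*y)^2" by simp
    moreover have "(x p - x q)^2 = 2*((x p - y)^2 + (x q - y)^2) - (x p + x q - 2*y)^2"
      by algebra
    moreover have aux: "\<And>C D S::real. 0 \<le> C \<Longrightarrow> D = 2*S - C \<Longrightarrow> D/2 \<le> S" by linarith
    ultimately show ?thesis by blast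
  qed
  moreover have "\<eta>/2 * (x p - x q)^2 = \<eta> * ((x p - x q)^2 / 2)" by simp
  moreover have "\<eta> * ((x p - x q)^2 / 2) \<le> \<eta> * ((x p - y)^2 + (x q - y)^2)"
    using h6 assms by (intro mult_left_mono) auto
  ultimately show ?thesis by (simp add: algebra_simps)
qed

lemma sumsq_le:
  fixes f :: "nat \<Rightarrow> real"
  assumes "finite F" "\<forall>i\<in>F. f i \<ge> 0"
  shows "(\<Sum>i\<in>F. (f i)^2) \<le> (\<Sum>i\<in>F. f i)^2"
  using assms
proof (induction F rule: finite_induct)
  case empty thus ?case by simp
next
  case (insert a F)
  have "0 \<le> f a * (\<Sum>i\<in>F. f i)" using insert by (simp add: sum_nonneg)
  thus ?case using insert by (simp add: power2_eq_square algebra_simps)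
qed

lemma step_decrease:
  fixes x x' :: "nat \<Rightarrow> real" and a :: "nat \<Rightarrow> nat \<Rightarrow> real"
  assumes Q: "Q \<ge> 1" and n: "n > 0"
  and mult: "\<forall>i<n. \<exists>m::int. x i = of_int m / real Q"
  and ds: "doubly_stochastic n a"
  and x': "\<forall>i<n. x' i = rdown Q (\<Sum>j<n. a i j * x j)"
  shows "(\<Sum>i<n. \<Sum>j<n. a i j * (x j - (\<Sum>l<n. a i l * x l))^2) \<le> Vlow n x - Vlow n x'"
proof -
  define m where "m = minval n x"
  define y where "y i = (\<Sum>l<n. a i l * x l)" for i
  have nn: "\<forall>i<n. \<forall>j<n. a i j \<ge> 0" and rs: "\<forall>i<n. (\<Sum>j<n. a i j) = 1"
    using ds unfolding doubly_stochastic_def by auto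
  have fin: "finite (x ` {..<n})" "x ` {..<n} \<noteq> {}" using n by auto
  have "m \<in> x ` {..<n}" unfolding m_def minval_def using fin by (simp add: Min_in)
  then obtain i0 where i0: "i0<n" "m = x i0" by auto
  then obtain m0::int where m0: "m = of_int m0 / real Q" using mult by auto
  have mle: "m \<le> x j" if "j<n" for j unfolding m_def minval_def using fin that by (simp add: Min_le)
  have ym: "m \<le> y i" if "i<n" for i
    unfolding y_def by (rule conv_ge) (use nn rs mle that in auto)
  have x'm: "m \<le> x' i" if "i<n" for i
    using rdown_ge[OF Q m0 ym[OF that]] x' that by (simp add: y_def)
  have x'y: "x' i \<le> y i" if "i<n" for i
    using rdown_le[OF Q] x' that by (simp add: y_def)
  define m' where "m' = minval n x'"
  have fin': "finite (x' ` {..<n})" "x' ` {..<n} \<noteq> {}" using n by auto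
  have m'ge: "m \<le> m'" unfolding m'_def minval_def using fin' x'm by (auto intro!: Min.boundedI)
  have m'le: "m' \<le> x' i" if "i<n" for i unfolding m'_def minval_def using fin' that by (simp add: Min_le)
  have "Vlow n x' = (\<Sum>i<n. (x' i - m')^2)" by (simp add: Vlow_def m'_def)
  also have "\<dots> \<le> (\<Sum>i<n. (x' i - m)^2)"
    by (rule sum_mono) (use m'ge m'le in \<open>auto intro!: power_mono\<close>)
  also have "\<dots> \<le> (\<Sum>i<n. (y i - m)^2)"
    by (rule sum_mono) (use x'm x'y in \<open>auto intro!: power_mono\<close>)
  also have "\<dots> = (\<Sum>i<n. (x i - m)^2) - (\<Sum>i<n. \<Sum>j<n. a i j * (x j - (\<Sum>l<n. a i l * x l))^2)"
    unfolding y_def by (rule mat_ident[OF ds])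
  also have "(\<Sum>i<n. (x i - m)^2) = Vlow n x" by (simp add: Vlow_def m_def)
  finally show ?thesis by simp
qed

lemma inv_lower:
  fixes x :: "nat \<Rightarrow> nat \<Rightarrow> real" and A :: "nat \<Rightarrow> nat \<Rightarrow> nat \<Rightarrow> real"
  assumes Q: "Q \<ge> 1" and xrec: "\<forall>k. \<forall>i<n. x (Suc k) i = rdown Q (\<Sum>j<n. A k i j * x k j)"
  and ds: "\<forall>k. doubly_stochastic n (A k)"
  and U: "U \<subseteq> {..<n}" and u: "u = of_int m / real Q"
  and start: "\<forall>p\<in>U. u \<le> x s0 p"
  and closed: "\<forall>s. s0 \<le> s \<and> s < t \<longrightarrow> (\<forall>p\<in>U. \<forall>j<n. j \<notin> U \<longrightarrow> A s p j = 0)"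
  and st: "s0 \<le> t"
  shows "\<forall>p\<in>U. u \<le> x t p"
proof (rule dec_induct[OF st])
  show "\<forall>p\<in>U. u \<le> x s0 p" by fact
next
  fix s assume s: "s0 \<le> s" "s < t" and IH: "\<forall>p\<in>U. u \<le> x s p"
  show "\<forall>p\<in>U. u \<le> x (Suc s) p"
  proof
    fix p assume p: "p \<in> U"
    have pn: "p < n" using U p by auto
    have nn: "\<forall>j<n. A s p j \<ge> 0" and rs: "(\<Sum>j<n. A s p j) = 1"
      using ds pn unfolding doubly_stochastic_def by auto
    have z: "\<forall>j<n. j \<notin> U \<longrightarrow> A s p j = 0" using closed s p by auto
    have "u \<le> (\<Sum>j<n. A s p j * x s j)"
    proof (rule conv_ge[OF nn rs], intro allI impI)
      fix j assume "j < n" "0 < A s p j"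
      thus "u \<le> x s j" using z IH by (cases "j \<in> U") auto
    qed
    thus "u \<le> x (Suc s) p" using rdown_ge[OF Q u] xrec pn by simp
  qed
qed

lemma inv_upper:
  fixes x :: "nat \<Rightarrow> nat \<Rightarrow> real" and A :: "nat \<Rightarrow> nat \<Rightarrow> nat \<Rightarrow> real"
  assumes Q: "Q \<ge> 1" and xrec: "\<forall>k. \<forall>i<n. x (Suc k) i = rdown Q (\<Sum>j<n. A k i j * x k j)"
  and ds: "\<forall>k. doubly_stochastic n (A k)"
  and U: "U \<subseteq> {..<n}"
  and start: "\<forall>p\<in>U. x s0 p \<le> u"
  and closed: "\<forall>s. s0 \<le> s \<and> s < t \<longrightarrow> (\<forall>p\<in>U. \<forall>j<n. j \<notin> U \<longrightarrow> A s p j = 0)"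
  and st: "s0 \<le> t"
  shows "\<forall>p\<in>U. x t p \<le> u"
proof (rule dec_induct[OF st])
  show "\<forall>p\<in>U. x s0 p \<le> u" by fact
next
  fix s assume s: "s0 \<le> s" "s < t" and IH: "\<forall>p\<in>U. x s p \<le> u"
  show "\<forall>p\<in>U. x (Suc s) p \<le> u"
  proof
    fix p assume p: "p \<in> U"
    have pn: "p < n" using U p by auto
    have nn: "\<forall>j<n. A s p j \<ge> 0" and rs: "(\<Sum>j<n. A s p j) = 1"
      using ds pn unfolding doubly_stochastic_def by auto
    have z: "\<forall>j<n. j \<notin> U \<longrightarrow> A s p j = 0" using closed s p by auto
    have "(\<Sum>j<n. A s p j * x s j) \<le> u"
    proof (rule conv_le[OF nn rs], intro allI impI)
      fix j assume "j < n" "0 < A s p j"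
      thus "x s j \<le> u" using z IH by (cases "j \<in> U") auto
    qed
    moreover have "x (Suc s) p \<le> (\<Sum>j<n. A s p j * x s j)" using rdown_le[OF Q] xrec pn by simp
    ultimately show "x (Suc s) p \<le> u" by linarith
  qed
qed

theorem lemma7:
  fixes n B Q :: nat and \<eta> :: real
    and A :: "nat \<Rightarrow> nat \<Rightarrow> nat \<Rightarrow> real" and x :: "nat \<Rightarrow> nat \<Rightarrow> real"
  assumes eta_pos: "\<eta> > 0" and B: "B \<ge> 1" and Q: "Q \<ge> 1"
    and x0: "\<forall>i<n. \<exists>m::int. x 0 i = of_int m / real Q"
    and xrec: "\<forall>k. \<forall>i<n. x (Suc k) i = rdown Q (\<Sum>j<n. A k i j * x k j)"
    and ds: "\<forall>k. doubly_stochastic n (A k)"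
    and diag: "\<forall>k. \<forall>i<n. A k i i > 0"
    and lowb: "\<forall>k. \<forall>i<n. \<forall>j<n. A k i j > 0 \<longrightarrow> A k i j \<ge> \<eta>"
    and conn: "\<forall>k \<sigma>. \<sigma> permutes {..<n} \<longrightarrow>
                 (\<forall>p q. p \<le> q \<longrightarrow> q < n \<longrightarrow> x (k*B) (\<sigma> q) \<le> x (k*B) (\<sigma> p)) \<longrightarrow>
                 (\<forall>d. 1 \<le> d \<longrightarrow> d \<le> n - 1 \<longrightarrow>
                    x (k*B) (\<sigma> (d - 1)) = x (k*B) (\<sigma> d) \<or>
                    (\<exists>t i j. k*B \<le> t \<and> t \<le> (k+1)*B - 1 \<and>
                       i \<in> \<sigma> ` {..<d} \<and> j \<in> \<sigma> ` {d..<n} \<and>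
                       ((i, j) \<in> edges n (A t) \<or> (j, i) \<in> edges n (A t))))"
    and perm: "\<sigma> permutes {..<n}"
    and sorted: "\<forall>p q. p \<le> q \<longrightarrow> q < n \<longrightarrow> x (k*B) (\<sigma> q) \<le> x (k*B) (\<sigma> p)"
  shows "Vlow n (x (k*B)) - Vlow n (x ((k+1)*B))
           \<ge> \<eta> / 2 * (\<Sum>i<n-1. (x (k*B) (\<sigma> i) - x (k*B) (\<sigma> (i+1)))^2)"
proof (cases "n = 0")
  case True
  thus ?thesis by (simp add: Vlow_def)
next
  case False
  hence npos: "n > 0" by simp
  have Aprops: "\<forall>s. \<forall>i<n. \<forall>j<n. A s i j \<ge> 0" using ds unfolding doubly_stochastic_def by auto
  have multall: "\<forall>i<n. \<exists>m::int. x t i = of_int m / real Q" for t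
  proof (induction t)
    case 0 thus ?case using x0 by simp
  next
    case (Suc t) thus ?case using xrec rdown_mult by simp
  qed
  define T where "T = {k*B..<(k+1)*B}"
  define E where "E t r = (\<Sum>j<n. A t r j * (x t j - (\<Sum>l<n. A t r l * x t l))^2)" for t r
  have step: "(\<Sum>r<n. E t r) \<le> Vlow n (x t) - Vlow n (x (Suc t))" for t
  proof -
    have x': "\<forall>i<n. x (Suc t) i = rdown Q (\<Sum>j<n. A t i j * x t j)" using xrec by blast
    show ?thesis unfolding E_def by (rule step_decrease[OF Q npos multall[of t] ds[rule_format, of t] x'])
  qed
  have tele: "Vlow n (x (k*B)) - Vlow n (x ((k+1)*B)) = (\<Sum>t\<in>T. Vlow n (x t) - Vlow n (x (Suc t)))"
    using sum_Suc_diff'[of "k*B" "(k+1)*B" "\<lambda>t. - Vlow n (x t)"] unfolding T_def by simp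
  have Enn: "E t r \<ge> 0" if "r < n" for t r
    unfolding E_def using Aprops that by (auto intro!: sum_nonneg)
  define h where "h i = x (k*B) (\<sigma> i)" for i
  define g where "g i = h i - h (Suc i)" for i
  define top where "top i = \<sigma> ` {..<Suc i}" for i
  define bot where "bot i = \<sigma> ` {Suc i..<n}" for i
  define crossR where "crossR i s = (\<exists>r<n. \<exists>p\<in>top i. \<exists>q\<in>bot i. A s r p > 0 \<and> A s r q > 0)" for i s
  define Cuts where "Cuts = {i \<in> {..<n-1}. g i \<noteq> 0}"
  have crossI: "crossR i s" if "r<n" "p\<in>top i" "q\<in>bot i" "A s r p>0" "A s r q>0" for i s r p q
    unfolding crossR_def using that by blast
  have dg: "A s p p > 0" if "p < n" for s p using diag that by blast
  have sig_in: "\<sigma> i < n \<longleftrightarrow> i < n" for i using permutes_in_image[OF perm] by simp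
  have sig_img: "\<sigma> ` {..<n} = {..<n}" using permutes_image[OF perm] .
  have sig_lt: "\<sigma> m < n" if "m < n" for m using sig_in[THEN iffD2, OF that] .
  have top_sub: "top i \<subseteq> {..<n}" if "i < n" for i unfolding top_def
  proof (rule image_subsetI)
    fix m assume "m \<in> {..<Suc i}" hence "m < n" using that by simp
    thus "\<sigma> m \<in> {..<n}" using sig_lt by simp
  qed
  have bot_sub: "bot i \<subseteq> {..<n}" for i unfolding bot_def
  proof (rule image_subsetI)
    fix m assume "m \<in> {Suc i..<n}" hence "m < n" by simp
    thus "\<sigma> m \<in> {..<n}" using sig_lt by simp
  qed
  have notop: "j \<in> bot i" if jn: "j < n" and jt: "j \<notin> top i" for i j
  proof -
    have "j \<in> \<sigma> ` {..<n}" using sig_img jn by simp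
    then obtain m where m: "m < n" "j = \<sigma> m" by auto
    hence "m \<ge> Suc i" using jt unfolding top_def by (metis imageI lessThan_iff not_less)
    thus ?thesis using m unfolding bot_def by auto
  qed
  have nobot: "j \<in> top i" if jn: "j < n" and jb: "j \<notin> bot i" for i j
  proof -
    have "j \<in> \<sigma> ` {..<n}" using sig_img jn by simp
    then obtain m where m: "m < n" "j = \<sigma> m" by auto
    hence "m < Suc i" using jb unfolding bot_def by (metis atLeastLessThan_iff imageI not_less)
    thus ?thesis using m unfolding top_def by auto
  qed
  have gnn: "g i \<ge> 0" if "i < n - 1" for i
    unfolding g_def h_def using sorted that by auto
  have exc: "\<exists>s. s \<in> T \<and> crossR i s" if "i \<in> Cuts" for i
  proof -
    have i: "i < n - 1" "g i \<noteq> 0" using that unfolding Cuts_def by auto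
    have "x (k*B) (\<sigma> (Suc i - 1)) \<noteq> x (k*B) (\<sigma> (Suc i))" using i(2) unfolding g_def h_def by simp
    moreover have "1 \<le> Suc i" "Suc i \<le> n - 1" using i(1) by auto
    note cc = conn[rule_format, OF perm sorted[rule_format] this]
    ultimately obtain t p q where tpq: "k*B \<le> t" "t \<le> (k+1)*B - 1" "p \<in> \<sigma> ` {..<Suc i}" "q \<in> \<sigma> ` {Suc i..<n}"
       "(p, q) \<in> edges n (A t) \<or> (q, p) \<in> edges n (A t)"
      by auto
    have "(k+1)*B \<ge> 1" using B by simp
    hence tT: "t \<in> T" using tpq unfolding T_def by auto
    have pn: "p < n" "q < n" using tpq(3,4) sig_lt i(1) by auto
    have pt: "p \<in> top i" using tpq(3) unfolding top_def .
    have qb: "q \<in> bot i" using tpq(4) unfolding bot_def .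
    have "crossR i t"
      using tpq(5)
    proof
      assume "(p, q) \<in> edges n (A t)"
      hence "A t q p > 0" unfolding edges_def by auto
      thus ?thesis by (rule crossI[OF pn(2) pt qb _ dg[OF pn(2)]])
    next
      assume "(q, p) \<in> edges n (A t)"
      hence "A t p q > 0" unfolding edges_def by auto
      thus ?thesis by (rule crossI[OF pn(1) pt qb dg[OF pn(1)]])
    qed
    thus ?thesis using tT by blast
  qed
  define tc where "tc i = (LEAST s. s \<in> T \<and> crossR i s)" for i
  define rc where "rc i = (SOME r. r<n \<and> (\<exists>p\<in>top i. \<exists>q\<in>bot i. A (tc i) r p > 0 \<and> A (tc i) r q > 0))" for i
  have tc_prop: "tc i \<in> T \<and> crossR i (tc i)" if "i \<in> Cuts" for i
    unfolding tc_def using exc[OF that] by (rule LeastI_ex)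
  have tc_min: "\<not> crossR i s" if "s \<in> T" "s < tc i" for i s
    using that not_less_Least unfolding tc_def by blast
  have rc_prop: "rc i < n \<and> (\<exists>p\<in>top i. \<exists>q\<in>bot i. A (tc i) r p > 0 \<and> A (tc i) r q > 0)"
    if "i \<in> Cuts" "r = rc i" for i r
    unfolding that(2) rc_def by (rule someI_ex) (use tc_prop[OF that(1)] in \<open>auto simp: crossR_def\<close>)
  have invs: "(\<forall>p\<in>top i. h i \<le> x (tc i) p) \<and> (\<forall>q\<in>bot i. x (tc i) q \<le> h (Suc i))" if "i \<in> Cuts" for i
  proof -
    have i: "i < n - 1" using that unfolding Cuts_def by auto
    have tcT: "tc i \<in> T" using tc_prop[OF that] by simp
    have kB: "k*B \<le> tc i" using tcT unfolding T_def by simp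
    have nc: "\<not> crossR i s" if "k*B \<le> s" "s < tc i" for s
      using tc_min[of s i] that tcT unfolding T_def by auto
    have closedT: "\<forall>s. k*B \<le> s \<and> s < tc i \<longrightarrow> (\<forall>p\<in>top i. \<forall>j<n. j \<notin> top i \<longrightarrow> A s p j = 0)"
    proof (intro allI impI ballI)
      fix s p j assume s: "k*B \<le> s \<and> s < tc i" and p: "p \<in> top i" and j: "j < n" "j \<notin> top i"
      have "i < n" using i by simp
      hence pn: "p < n" using p top_sub by blast
      have jb: "j \<in> bot i" using notop j by auto
      show "A s p j = 0"
      proof (rule ccontr)
        assume "A s p j \<noteq> 0"
        moreover have "A s p j \<ge> 0" using Aprops pn j(1) by blast
        ultimately have "A s p j > 0" by linarith
        hence "crossR i s" by (rule crossI[OF pn p jb dg[OF pn]])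
        thus False using nc s by blast
      qed
    qed
    have closedB: "\<forall>s. k*B \<le> s \<and> s < tc i \<longrightarrow> (\<forall>p\<in>bot i. \<forall>j<n. j \<notin> bot i \<longrightarrow> A s p j = 0)"
    proof (intro allI impI ballI)
      fix s p j assume s: "k*B \<le> s \<and> s < tc i" and p: "p \<in> bot i" and j: "j < n" "j \<notin> bot i"
      have pn: "p < n" using p bot_sub by auto
      have jt: "j \<in> top i" using nobot j by auto
      show "A s p j = 0"
      proof (rule ccontr)
        assume "A s p j \<noteq> 0"
        moreover have "A s p j \<ge> 0" using Aprops pn j(1) by blast
        ultimately have "A s p j > 0" by linarith
        hence "crossR i s" by (rule crossI[OF pn jt p _ dg[OF pn]])
        thus False using nc s by blast
      qed
    qed
    have sin: "\<sigma> i < n" using sig_lt i by simp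
    obtain m where m: "h i = of_int m / real Q" using multall sin unfolding h_def by blast
    have startT: "\<forall>p\<in>top i. h i \<le> x (k*B) p"
      unfolding top_def h_def using sorted i by auto
    have startB: "\<forall>p\<in>bot i. x (k*B) p \<le> h (Suc i)"
      unfolding bot_def h_def using sorted i by auto
    show ?thesis
      using inv_lower[OF Q xrec ds top_sub[of i] m startT closedT kB]
            inv_upper[OF Q xrec ds bot_sub[of i] startB closedB kB] i by auto
  qed
  have fiber: "\<eta>/2 * (\<Sum>i\<in>{i. i\<in>Cuts \<and> (tc i, rc i) = (t,r)}. (g i)^2) \<le> E t r"
    if tT: "t \<in> T" and rn: "r < n" for t r
  proof (cases "{i. i\<in>Cuts \<and> (tc i, rc i) = (t,r)} = {}")
    case True
    hence "(\<Sum>i\<in>{i. i\<in>Cuts \<and> (tc i, rc i) = (t,r)}. (g i)^2) = 0" by (simp only: sum.empty)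
    thus ?thesis using Enn[OF rn, of t] by simp
  next
    case False
    define F where "F = {i. i\<in>Cuts \<and> (tc i, rc i) = (t,r)}"
    have Fsub: "F \<subseteq> {..<n-1}" unfolding F_def Cuts_def by auto
    have finF: "finite F" using Fsub finite_subset by blast
    have Fne: "F \<noteq> {}" using False unfolding F_def by simp
    define i1 where "i1 = Min F"
    define i2 where "i2 = Max F"
    have i1F: "i1 \<in> F" unfolding i1_def using finF Fne by (rule Min_in)
    have i2F: "i2 \<in> F" unfolding i2_def using finF Fne by (rule Max_in)
    have i1le: "i1 \<le> i" if "i \<in> F" for i unfolding i1_def using finF that by (rule Min_le)
    have i2ge: "i \<le> i2" if "i \<in> F" for i unfolding i2_def using finF that by (rule Max_ge)
    have i1C: "i1 \<in> Cuts" "tc i1 = t" "rc i1 = r" using i1F unfolding F_def by auto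
    have i2C: "i2 \<in> Cuts" "tc i2 = t" "rc i2 = r" using i2F unfolding F_def by auto
    obtain p where p: "p \<in> top i1" "A t r p > 0" using rc_prop[OF i1C(1) refl] i1C by auto
    obtain q where q: "q \<in> bot i2" "A t r q > 0" using rc_prop[OF i2C(1) refl] i2C by auto
    have i12: "i1 \<le> i2" using i1le i2F by blast
    have i2n: "i2 < n-1" using i2F Fsub by auto
    have i1n: "i1 < n" using i12 i2n by simp
    have pn: "p < n" using p(1) top_sub[OF i1n] by blast
    have qn: "q < n" using q(1) bot_sub by blast
    have hp: "h i1 \<le> x t p" using invs[OF i1C(1)] p(1) i1C(2) by auto
    have hq: "x t q \<le> h (Suc i2)" using invs[OF i2C(1)] q(1) i2C(2) by auto
    have "(\<Sum>i\<in>{i1..i2}. g i) = (\<Sum>i=i1..i2. (- h (Suc i)) - (- h i))" by (simp add: g_def)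
    also have "\<dots> = - h (Suc i2) - - h i1" using i12 by (intro sum_Suc_diff) simp
    finally have tel: "(\<Sum>i\<in>{i1..i2}. g i) = h i1 - h (Suc i2)" by simp
    have gF: "g i \<ge> 0" if "i \<in> F" for i using gnn that Fsub by blast
    have sumF_le: "(\<Sum>i\<in>F. g i) \<le> (\<Sum>i\<in>{i1..i2}. g i)"
    proof (rule sum_mono2)
      show "finite {i1..i2}" by simp
      show "F \<subseteq> {i1..i2}" using i1le i2ge by auto
      fix b assume "b \<in> {i1..i2} - F"
      hence "b < n - 1" using i2n by auto
      thus "0 \<le> g b" by (rule gnn)
    qed
    have sumF_nn: "0 \<le> (\<Sum>i\<in>F. g i)" by (rule sum_nonneg) (use gF in auto)
    have sq1: "(\<Sum>i\<in>F. (g i)^2) \<le> (\<Sum>i\<in>F. g i)^2" by (rule sumsq_le[OF finF]) (use gF in auto)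
    have sq2: "(\<Sum>i\<in>F. g i)^2 \<le> (x t p - x t q)^2"
      by (rule power_mono) (use sumF_nn sumF_le tel hp hq in linarith)+
    have "\<forall>j<n. A t r j \<ge> 0" using Aprops rn by blast
    moreover have "A t r p \<ge> \<eta>" using lowb rn pn p(2) by blast
    moreover have "A t r q \<ge> \<eta>" using lowb rn qn q(2) by blast
    ultimately have rb: "\<eta>/2 * (x t p - x t q)^2 \<le> E t r"
      unfolding E_def using row_bound[of n "A t r" p q \<eta> "x t"] pn qn eta_pos by blast
    have "\<eta>/2 * (\<Sum>i\<in>F. (g i)^2) \<le> \<eta>/2 * (x t p - x t q)^2"
      by (rule mult_left_mono) (use sq1 sq2 eta_pos in auto)
    thus ?thesis using rb unfolding F_def by linarith
  qed
  have RHS: "(\<Sum>i<n-1. (x (k*B) (\<sigma> i) - x (k*B) (\<sigma> (i+1)))^2) = (\<Sum>i\<in>Cuts. (g i)^2)"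
  proof -
    have "(\<Sum>i<n-1. (x (k*B) (\<sigma> i) - x (k*B) (\<sigma> (i+1)))^2) = (\<Sum>i<n-1. (g i)^2)"
      by (simp add: g_def h_def)
    also have "\<dots> = (\<Sum>i\<in>Cuts. (g i)^2)" by (rule sum.mono_neutral_right) (auto simp: Cuts_def)
    finally show ?thesis .
  qed
  have finC: "finite Cuts" unfolding Cuts_def by simp
  have finTN: "finite (T \<times> {..<n})" unfolding T_def by simp
  have imgC: "(\<lambda>i. (tc i, rc i)) ` Cuts \<subseteq> T \<times> {..<n}"
    using tc_prop rc_prop by blast
  have grp: "(\<Sum>z\<in>T \<times> {..<n}. \<Sum>i\<in>{i. i\<in>Cuts \<and> (tc i, rc i) = z}. (g i)^2) = (\<Sum>i\<in>Cuts. (g i)^2)"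
    using sum.group[OF finC finTN imgC, of "\<lambda>i. (g i)^2"] by simp
  have "\<eta>/2 * (\<Sum>i\<in>Cuts. (g i)^2) = \<eta>/2 * (\<Sum>z\<in>T \<times> {..<n}. \<Sum>i\<in>{i. i\<in>Cuts \<and> (tc i, rc i) = z}. (g i)^2)"
    by (simp only: grp)
  also have "\<dots> = (\<Sum>z\<in>T \<times> {..<n}. \<eta>/2 * (\<Sum>i\<in>{i. i\<in>Cuts \<and> (tc i, rc i) = z}. (g i)^2))"
    by (rule sum_distrib_left)
  also have "\<dots> \<le> (\<Sum>z\<in>T \<times> {..<n}. case_prod E z)"
  proof (rule sum_mono)
    fix z assume "z \<in> T \<times> {..<n}"
    then obtain t r where z: "z = (t, r)" "t \<in> T" "r < n" by auto
    show "\<eta>/2 * (\<Sum>i\<in>{i. i\<in>Cuts \<and> (tc i, rc i) = z}. (g i)^2) \<le> case_prod E z"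
      using fiber[OF z(2,3)] z(1) by simp
  qed
  also have "\<dots> = (\<Sum>t\<in>T. \<Sum>r<n. E t r)" by (simp add: sum.cartesian_product)
  also have "\<dots> \<le> (\<Sum>t\<in>T. Vlow n (x t) - Vlow n (x (Suc t)))" by (rule sum_mono) (rule step)
  also have "\<dots> = Vlow n (x (k*B)) - Vlow n (x ((k+1)*B))" using tele by simp
  finally show ?thesis using RHS by simp
qed

end
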